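(* Let $\Omega\subset\mathbb{R}^N$ be a bounded open connected set, $F:\Omega\times\mathbb{R}\times\mathcal{S}(N)\to\mathbb{R}$ continuous with $\{(r,A):F(x,r,A)=0\}\neq\emptyset$ for each $x\in\Omega$, and let $\Phi$ be either a Hausdorff continuous proper elliptic map on $\Omega$ (constrained case) or $\Phi(x)=\mathbb{R}\times\mathcal{S}(N)$ for all $x$ (unconstrained case). Suppose $\Theta(x):=\{(r,A)\in\Phi(x):F(x,r,A)\ge0\}$ is a proper elliptic map. Assume that for every open $\Omega'\subset\subset\Omega$ and every $\eta>0$ there exists $\delta=\delta(\eta,\Omega')>0$ such that $F(y,r-\eta,A+\eta I)\ge F(x,r,A)$ for all $x,y\in\Omega'$ with $|x-y|<\delta$ and all $(r,A)\in\Phi(x)$. Then $\Theta$ is Hausdorff continuous on $\Omega$.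
   Context: $\mathcal{S}(N)$: real symmetric $N\times N$ matrices with the usual partial order, eigenvalues $\lambda_i(A)$, identity $I$. $\mathcal{Q}:=\{(s,P): s\le0,\ P\ge0\}$. A proper elliptic map assigns to each $x\in\Omega$ a closed, nonempty set $\subsetneq\mathbb{R}\times\mathcal{S}(N)$ invariant under adding elements of $\mathcal Q$. With the norm $\|(r,A)\|=\max\{|r|,\max_i|\lambda_i(A)|\}$ and the Hausdorff distance $d_{\mathcal H}$ between closed subsets (possibly $+\infty$), a map $\Theta$ is Hausdorff continuous on $\Omega$ if for all $x\in\Omega$ and $\eta>0$ there is $\delta>0$ with $d_{\mathcal H}(\Theta(x),\Theta(y))<\eta$ whenever $y\in\Omega$, $|x-y|<\delta$. *)

theory Defs
  imports "HOL-Analysis.Analysis"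
begin

text \<open>Real symmetric N x N matrices, N = CARD('n).\<close>
definition Sym :: "(real^'n^'n) set" where
  "Sym = {A. transpose A = A}"

definition psd :: "real^'n^'n \<Rightarrow> bool" where
  "psd P \<longleftrightarrow> P \<in> Sym \<and> (\<forall>v. 0 \<le> v \<bullet> (P *v v))"

definition eigvals :: "real^'n^'n \<Rightarrow> real set" where
  "eigvals A = {c. \<exists>v. v \<noteq> 0 \<and> A *v v = c *\<^sub>R v}"

definition maxabs_eig :: "real^'n^'n \<Rightarrow> real" where
  "maxabs_eig A = Sup (abs ` eigvals A)"

definition pnorm :: "real \<times> (real^'n^'n) \<Rightarrow> real" where
  "pnorm p = max \<bar>fst p\<bar> (maxabs_eig (snd p))"

definition hdist :: "(real \<times> (real^'n^'n)) set \<Rightarrow> (real \<times> (real^'n^'n)) set \<Rightarrow> ereal" where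
  "hdist X Y = max (SUP a\<in>X. INF b\<in>Y. ereal (pnorm (a - b)))
                   (SUP b\<in>Y. INF a\<in>X. ereal (pnorm (a - b)))"

definition proper_elliptic :: "(real^'n) set \<Rightarrow> (real^'n \<Rightarrow> (real \<times> (real^'n^'n)) set) \<Rightarrow> bool" where
  "proper_elliptic \<Omega> \<Theta> \<longleftrightarrow>
     (\<forall>x\<in>\<Omega>. \<Theta> x \<subseteq> UNIV \<times> Sym \<and> closed (\<Theta> x) \<and> \<Theta> x \<noteq> {} \<and> \<Theta> x \<noteq> UNIV \<times> Sym \<and>
        (\<forall>r A s P. (r, A) \<in> \<Theta> x \<and> s \<le> 0 \<and> psd P \<longrightarrow> (r + s, A + P) \<in> \<Theta> x))"

definition hausdorff_continuous :: "(real^'n) set \<Rightarrow> (real^'n \<Rightarrow> (real \<times> (real^'n^'n)) set) \<Rightarrow> bool" where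
  "hausdorff_continuous \<Omega> \<Theta> \<longleftrightarrow>
     (\<forall>x\<in>\<Omega>. \<forall>\<eta>>0. \<exists>\<delta>>0. \<forall>y\<in>\<Omega>. dist x y < \<delta> \<longrightarrow> hdist (\<Theta> x) (\<Theta> y) < ereal \<eta>)"

definition compactly_contained :: "'a::metric_space set \<Rightarrow> 'a set \<Rightarrow> bool" where
  "compactly_contained U V \<longleftrightarrow> compact (closure U) \<and> closure U \<subseteq> V"

end

theory Submission
  imports Defs
begin

lemma sym_dot:
  fixes M :: "real^'n^'n"
  assumes "M \<in> Sym"
  shows "v \<bullet> (M *v w) = w \<bullet> (M *v v)"
proof -
  have "v \<bullet> (M *v w) = (v v* M) \<bullet> w" by (simp add: dot_lmul_matrix)
  also have "v v* M = transpose M *v v" by simp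
  also have "transpose M = M" using assms by (simp add: Sym_def)
  finally show ?thesis by (simp add: inner_commute)
qed

lemma transpose_add': "transpose (A + B) = transpose A + transpose (B::real^'n^'n)"
  by (simp add: transpose_def vec_eq_iff)

lemma transpose_uminus': "transpose (- A) = - transpose (A::real^'n^'n)"
  by (simp add: transpose_def vec_eq_iff)

lemma Sym_add: "A \<in> Sym \<Longrightarrow> B \<in> Sym \<Longrightarrow> A + B \<in> Sym"
  by (simp add: Sym_def transpose_add')
lemma Sym_uminus: "A \<in> Sym \<Longrightarrow> - A \<in> Sym"
  by (simp add: Sym_def transpose_uminus')
lemma Sym_diff: "A \<in> Sym \<Longrightarrow> B \<in> Sym \<Longrightarrow> A - B \<in> Sym"
  using Sym_add[of A "-B"] Sym_uminus by fastforce
lemma Sym_id: "c *\<^sub>R mat 1 \<in> Sym"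
  by (simp add: Sym_def transpose_scalar)

lemma real_id: "(l - 2 * s * a + s^2 * Q) - l * (1 - 2 * s * b + s^2 * W)
   = - 2 * s * (a - l * b) + s^2 * (Q - l * W)" for l s a b Q W :: real
  by (simp add: algebra_simps)

lemma sym_min_eig:
  fixes M :: "real^'n^'n"
  assumes S: "M \<in> Sym"
  shows "\<exists>l\<in>eigvals M. \<forall>v. v \<bullet> (M *v v) \<ge> l * (v \<bullet> v)"
proof -
  let ?q = "\<lambda>v::real^'n. v \<bullet> (M *v v)"
  have cq: "continuous_on (sphere 0 1) ?q"
    by (intro continuous_intros continuous_on_compose2[OF linear_continuous_on[OF matrix_vector_mul_bounded_linear]]) auto
  have ne: "sphere (0::real^'n) 1 \<noteq> {}" by simp
  obtain v0 where v0: "v0 \<in> sphere 0 1" and mn: "\<And>v. v \<in> sphere 0 1 \<Longrightarrow> ?q v0 \<le> ?q v"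
    using continuous_attains_inf[OF compact_sphere ne cq] by blast
  define l where "l = ?q v0"
  have nv0: "norm v0 = 1" using v0 by simp
  have v0v0: "v0 \<bullet> v0 = 1" using nv0 by (simp add: dot_square_norm)
  have all: "?q u \<ge> l * (u \<bullet> u)" for u
  proof (cases "u = 0")
    case True then show ?thesis by simp
  next
    case False
    let ?u = "(1 / norm u) *\<^sub>R u"
    have "?u \<in> sphere 0 1" using False by simp
    hence "l \<le> ?q ?u" using mn l_def by blast
    also have "?q ?u = (1/norm u)^2 * ?q u"
      by (simp add: matrix_vector_mult_scaleR power2_eq_square)
    finally have "l \<le> (1/norm u)^2 * ?q u" .
    hence "l * (norm u)^2 \<le> (1/norm u)^2 * ?q u * (norm u)^2" by (rule mult_right_mono) simp
    also have "(1/norm u)^2 * ?q u * (norm u)^2 = ?q u" using False by (simp add: field_simps)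
    finally have "l * (norm u)^2 \<le> ?q u" .
    thus ?thesis by (simp add: power2_norm_eq_inner)
  qed
  define w where "w = M *v v0 - l *\<^sub>R v0"
  have wM0: "w \<bullet> w = w \<bullet> (M *v v0 - l *\<^sub>R v0)" by (simp only: w_def[symmetric])
  have wM: "w \<bullet> (M *v v0) - l * (w \<bullet> v0) = w \<bullet> w"
    unfolding wM0 by (simp only: inner_diff_right inner_scaleR_right)
  have sd: "v0 \<bullet> (M *v w) = w \<bullet> (M *v v0)" using sym_dot[OF S] .
  define C where "C = ?q w - l * (w \<bullet> w)"
  have exp: "?q (v0 - s *\<^sub>R w) - l * ((v0 - s *\<^sub>R w) \<bullet> (v0 - s *\<^sub>R w)) = - 2 * s * (w \<bullet> w) + s^2 * C" for s
  proof -
    have "?q (v0 - s *\<^sub>R w) = ?q v0 - 2 * s * (w \<bullet> (M *v v0)) + s^2 * ?q w"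
      using sd by (simp add: matrix_vector_mult_diff_distrib matrix_vector_mult_scaleR inner_diff_left inner_diff_right power2_eq_square) (simp add: algebra_simps)
    hence e1: "?q (v0 - s *\<^sub>R w) = l - 2 * s * (w \<bullet> (M *v v0)) + s^2 * ?q w"
      by (simp only: l_def)
    have e2: "(v0 - s *\<^sub>R w) \<bullet> (v0 - s *\<^sub>R w) = 1 - 2 * s * (w \<bullet> v0) + s^2 * (w \<bullet> w)"
      using v0v0 by (simp add: inner_diff_left inner_diff_right power2_eq_square inner_commute)
    have "?q (v0 - s *\<^sub>R w) - l * ((v0 - s *\<^sub>R w) \<bullet> (v0 - s *\<^sub>R w))
       = - 2 * s * (w \<bullet> (M *v v0) - l * (w \<bullet> v0)) + s^2 * (?q w - l * (w \<bullet> w))"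
      unfolding e1 e2 by (rule real_id)
    thus ?thesis unfolding wM C_def .
  qed
  have C0: "C \<ge> 0" using all[of w] by (simp add: C_def)
  have "w \<bullet> w = 0"
  proof (rule ccontr)
    assume "w \<bullet> w \<noteq> 0"
    hence p: "w \<bullet> w > 0" by (simp add: order_less_le)
    define s where "s = (w \<bullet> w) / (C + 1)"
    have s0: "s > 0" using p C0 by (simp add: s_def)
    have "0 \<le> - 2 * s * (w \<bullet> w) + s^2 * C" using all[of "v0 - s *\<^sub>R w"] exp[of s] by linarith
    hence "s * (2 * (w \<bullet> w)) \<le> s * (s * C)" by (simp add: power2_eq_square algebra_simps)
    hence "2 * (w \<bullet> w) \<le> s * C" using s0 by simp
    moreover have "s * C < w \<bullet> w"
    proof -
      have "(w \<bullet> w) * C < (w \<bullet> w) * (C + 1)" using p C0 by simp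
      thus ?thesis using p C0 unfolding s_def by (simp add: divide_simps)
    qed
    ultimately show False using p by linarith
  qed
  hence "M *v v0 = l *\<^sub>R v0" by (simp add: w_def)
  moreover have "v0 \<noteq> 0" using nv0 by auto
  ultimately have "l \<in> eigvals M" by (auto simp: eigvals_def)
  thus ?thesis using all by blast
qed

lemma eig_bdd:
  fixes M :: "real^'n^'n"
  shows "bdd_above (abs ` eigvals M)"
proof -
  have bl: "bounded_linear (\<lambda>x::real^'n. M *v x)" by (rule matrix_vector_mul_bounded_linear)
  obtain K where K: "\<forall>x. norm (M *v x) \<le> norm x * K"
    using bounded_linear.bounded[OF bl] by blast
  have b: "\<bar>c\<bar> \<le> K" if "c \<in> eigvals M" for c
  proof -
    from that obtain v where v: "v \<noteq> 0" "M *v v = c *\<^sub>R v" unfolding eigvals_def by blast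
    have "norm (M *v v) \<le> norm v * K" using K by blast
    hence "\<bar>c\<bar> * norm v \<le> norm v * K" unfolding v(2) norm_scaleR .
    hence "norm v * \<bar>c\<bar> \<le> norm v * K" by (simp only: mult.commute)
    moreover have "norm v > 0" using v(1) by simp
    ultimately show ?thesis by (meson mult_le_cancel_left_pos)
  qed
  show ?thesis by (rule bdd_aboveI[where M=K]) (use b in blast)
qed
lemma psd_shift:
  fixes M :: "real^'n^'n"
  assumes S: "M \<in> Sym" and lt: "maxabs_eig M < c"
  shows "psd (M + c *\<^sub>R mat 1)"
proof -
  obtain l where l: "l \<in> eigvals M" "\<And>v. v \<bullet> (M *v v) \<ge> l * (v \<bullet> v)"
    using sym_min_eig[OF S] by blast
  have "\<bar>l\<bar> \<le> maxabs_eig M" unfolding maxabs_eig_def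
    using l(1) eig_bdd by (intro cSup_upper) auto
  hence lc: "l + c \<ge> 0" using lt by linarith
  have "0 \<le> v \<bullet> ((M + c *\<^sub>R mat 1) *v v)" for v
  proof -
    have "v \<bullet> ((M + c *\<^sub>R mat 1) *v v) = v \<bullet> (M *v v) + c * (v \<bullet> v)"
      by (simp add: algebra_simps scaleR_matrix_vector_assoc[symmetric])
    also have "\<dots> \<ge> (l + c) * (v \<bullet> v)" using l(2)[of v] by (simp add: algebra_simps)
    finally show ?thesis using lc by (smt (verit) inner_ge_zero mult_nonneg_nonneg)
  qed
  thus ?thesis using S Sym_add Sym_id by (auto simp: psd_def)
qed

lemma eigvals_uminus: "eigvals (- M) = uminus ` eigvals (M::real^'n^'n)"
proof -
  have neg: "(- M) *v v = - (M *v v)" for v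
    by (simp add: matrix_vector_mult_def vec_eq_iff sum_negf)
  have eq: "(- (M *v v) = c *\<^sub>R v) \<longleftrightarrow> (M *v v = (- c) *\<^sub>R v)" for v c
    by (metis minus_minus scaleR_minus_left)
  have m: "c \<in> eigvals (- M) \<longleftrightarrow> - c \<in> eigvals M" for c
    unfolding eigvals_def mem_Collect_eq neg eq by (rule refl)
  show ?thesis
  proof (rule set_eqI)
    fix c show "c \<in> eigvals (- M) \<longleftrightarrow> c \<in> uminus ` eigvals M"
      unfolding m by (metis image_eqI minus_minus imageE)
  qed
qed
lemma maxabs_uminus: "maxabs_eig (- M) = maxabs_eig (M::real^'n^'n)"
  unfolding maxabs_eig_def eigvals_uminus image_image by simp


lemma eigvals_id: "eigvals (c *\<^sub>R (mat 1 :: real^'n^'n)) = {c}"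
proof -
  have mv: "(c *\<^sub>R (mat 1 :: real^'n^'n)) *v v = c *\<^sub>R v" for v
    by (simp add: scaleR_matrix_vector_assoc[symmetric])
  have one: "(1::real^'n) \<noteq> 0" by (simp add: vec_eq_iff)
  show ?thesis
  proof (rule set_eqI, rule iffI)
    fix c' assume "c' \<in> eigvals (c *\<^sub>R (mat 1 :: real^'n^'n))"
    then obtain v :: "real^'n" where "v \<noteq> 0" "c *\<^sub>R v = c' *\<^sub>R v" unfolding eigvals_def mv by blast
    thus "c' \<in> {c}" by (simp add: scaleR_cancel_right)
  next
    fix c' assume "c' \<in> {c}"
    thus "c' \<in> eigvals (c *\<^sub>R (mat 1 :: real^'n^'n))" unfolding eigvals_def mv using one by blast
  qed
qed

lemma pnorm_id: "pnorm (s, c *\<^sub>R (mat 1 :: real^'n^'n)) = max \<bar>s\<bar> \<bar>c\<bar>"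
  by (simp add: pnorm_def maxabs_eig_def eigvals_id)

lemma move:
  fixes \<Phi> :: "real^'n \<Rightarrow> (real \<times> (real^'n^'n)) set"
  assumes pe: "proper_elliptic \<Omega> \<Phi>" and y: "y \<in> \<Omega>" and b: "(r', A') \<in> \<Phi> y"
    and AS: "A \<in> Sym" and r: "\<bar>r - r'\<bar> < h" and m: "maxabs_eig (A - A') < h"
  shows "(r - h, A + h *\<^sub>R mat 1) \<in> \<Phi> y"
proof -
  have A'S: "A' \<in> Sym" using pe y b unfolding proper_elliptic_def by blast
  have P: "psd (A - A' + h *\<^sub>R mat 1)" using psd_shift[OF Sym_diff[OF AS A'S] m] .
  have "(r' + (r - r' - h), A' + (A - A' + h *\<^sub>R mat 1)) \<in> \<Phi> y"
    using pe y b P r unfolding proper_elliptic_def by (metis diff_le_0_iff_le abs_le_D1 less_imp_le diff_le_eq)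
  thus ?thesis by (simp add: algebra_simps)
qed

lemma hdist_left:
  assumes "hdist X Y < ereal h" "a \<in> X"
  shows "\<exists>b\<in>Y. pnorm (a - b) < h"
proof -
  have "(INF b\<in>Y. ereal (pnorm (a - b))) \<le> (SUP a\<in>X. INF b\<in>Y. ereal (pnorm (a - b)))"
    using assms(2) by (rule SUP_upper)
  also have "\<dots> \<le> hdist X Y" unfolding hdist_def by simp
  finally have "(INF b\<in>Y. ereal (pnorm (a - b))) < ereal h" using assms(1) by simp
  thus ?thesis by (simp add: INF_less_iff)
qed

lemma hdist_right:
  assumes "hdist X Y < ereal h" "b \<in> Y"
  shows "\<exists>a\<in>X. pnorm (a - b) < h"
proof -
  have "(INF a\<in>X. ereal (pnorm (a - b))) \<le> (SUP b\<in>Y. INF a\<in>X. ereal (pnorm (a - b)))"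
    using assms(2) by (rule SUP_upper)
  also have "\<dots> \<le> hdist X Y" unfolding hdist_def by simp
  finally have "(INF a\<in>X. ereal (pnorm (a - b))) < ereal h" using assms(1) by simp
  thus ?thesis by (simp add: INF_less_iff)
qed

lemma pnorm_parts: "\<bar>fst p\<bar> \<le> pnorm p" "maxabs_eig (snd p) \<le> pnorm p"
  by (auto simp: pnorm_def)

theorem theorem6p8:
  fixes \<Omega> :: "(real^'n) set"
    and F :: "real^'n \<Rightarrow> real \<Rightarrow> real^'n^'n \<Rightarrow> real"
    and \<Phi> :: "real^'n \<Rightarrow> (real \<times> (real^'n^'n)) set"
  assumes "bounded \<Omega>" "open \<Omega>" "connected \<Omega>"
    and "continuous_on (\<Omega> \<times> UNIV \<times> Sym) (\<lambda>(x, r, A). F x r A)"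
    and "\<forall>x\<in>\<Omega>. \<exists>r A. A \<in> Sym \<and> F x r A = 0"
    and "(proper_elliptic \<Omega> \<Phi> \<and> hausdorff_continuous \<Omega> \<Phi>) \<or> (\<forall>x. \<Phi> x = UNIV \<times> Sym)"
    and "proper_elliptic \<Omega> (\<lambda>x. {(r, A) \<in> \<Phi> x. F x r A \<ge> 0})"
    and "\<forall>\<Omega>'. open \<Omega>' \<and> compactly_contained \<Omega>' \<Omega> \<longrightarrow>
           (\<forall>\<eta>>0. \<exists>\<delta>>0. \<forall>x\<in>\<Omega>'. \<forall>y\<in>\<Omega>'. dist x y < \<delta> \<longrightarrow>
              (\<forall>(r, A)\<in>\<Phi> x. F y (r - \<eta>) (A + \<eta> *\<^sub>R mat 1) \<ge> F x r A))"
  shows "hausdorff_continuous \<Omega> (\<lambda>x. {(r, A) \<in> \<Phi> x. F x r A \<ge> 0})"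
  unfolding hausdorff_continuous_def
proof (intro ballI allI impI)
  fix x \<eta> assume xO: "x \<in> \<Omega>" and \<eta>: "(\<eta>::real) > 0"
  define \<Theta> where "\<Theta> = (\<lambda>x. {(r, A) \<in> \<Phi> x. F x r A \<ge> 0})"
  define h where "h = \<eta> / 2"
  have h0: "h > 0" using \<eta> by (simp add: h_def)
  obtain e where e0: "e > 0" and eO: "cball x e \<subseteq> \<Omega>"
    using open_contains_cball assms(2) xO by blast
  define \<Omega>' where "\<Omega>' = ball x (e/2)"
  have cc: "open \<Omega>' \<and> compactly_contained \<Omega>' \<Omega>"
    unfolding \<Omega>'_def compactly_contained_def using e0 eO
    by (auto simp: closure_ball)
  have "\<exists>\<delta>>0. \<forall>x\<in>\<Omega>'. \<forall>y\<in>\<Omega>'. dist x y < \<delta> \<longrightarrow>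
      (\<forall>(r, A)\<in>\<Phi> x. F y (r - h) (A + h *\<^sub>R mat 1) \<ge> F x r A)"
    using assms(8) cc h0 by blast
  then obtain d1 where d1: "d1 > 0" and D1': "\<forall>x\<in>\<Omega>'. \<forall>y\<in>\<Omega>'. dist x y < d1 \<longrightarrow>
      (\<forall>(r, A)\<in>\<Phi> x. F y (r - h) (A + h *\<^sub>R mat 1) \<ge> F x r A)" by blast
  have D1: "\<And>x y. x \<in> \<Omega>' \<Longrightarrow> y \<in> \<Omega>' \<Longrightarrow> dist x y < d1 \<Longrightarrow>
      (\<forall>(r, A)\<in>\<Phi> x. F y (r - h) (A + h *\<^sub>R mat 1) \<ge> F x r A)"
    using D1' by blast
  obtain d2 where d2: "d2 > 0" and D2: "\<And>y. y \<in> \<Omega> \<Longrightarrow> dist x y < d2 \<Longrightarrow>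
      (\<forall>(r, A)\<in>\<Phi> x. (r - h, A + h *\<^sub>R mat 1) \<in> \<Phi> y) \<and> (\<forall>(r, A)\<in>\<Phi> y. (r - h, A + h *\<^sub>R mat 1) \<in> \<Phi> x)"
  proof (cases "\<forall>x. \<Phi> x = UNIV \<times> Sym")
    case True
    show ?thesis
      by (rule that[of 1]) (auto simp: True intro: Sym_add Sym_id)
  next
    case False
    hence pe: "proper_elliptic \<Omega> \<Phi>" and hc: "hausdorff_continuous \<Omega> \<Phi>" using assms(6) by auto
    have "\<exists>d>0. \<forall>y\<in>\<Omega>. dist x y < d \<longrightarrow> hdist (\<Phi> x) (\<Phi> y) < ereal h"
      using hc xO h0 unfolding hausdorff_continuous_def by blast
    then obtain d where d: "d > 0" and D': "\<forall>y\<in>\<Omega>. dist x y < d \<longrightarrow> hdist (\<Phi> x) (\<Phi> y) < ereal h" by blast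
    have D: "\<And>y. y \<in> \<Omega> \<Longrightarrow> dist x y < d \<Longrightarrow> hdist (\<Phi> x) (\<Phi> y) < ereal h" using D' by blast
    show ?thesis
    proof (rule that[OF d], intro conjI ballI)
      fix y p assume y: "y \<in> \<Omega>" "dist x y < d"
      { assume p: "p \<in> \<Phi> x"
        obtain r A where pr: "p = (r, A)" by fastforce
        have AS: "A \<in> Sym" using pe xO p pr unfolding proper_elliptic_def by blast
        obtain b where b: "b \<in> \<Phi> y" "pnorm (p - b) < h" using hdist_left[OF D[OF y] p] by blast
        obtain r' A' where br: "b = (r', A')" by fastforce
        have "\<bar>r - r'\<bar> < h" "maxabs_eig (A - A') < h"
          using pnorm_parts[of "p - b"] b(2) by (auto simp: pr br)
        hence "(r - h, A + h *\<^sub>R mat 1) \<in> \<Phi> y" using move[OF pe y(1) _ AS] b(1) br by blast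
        thus "case p of (r, A) \<Rightarrow> (r - h, A + h *\<^sub>R mat 1) \<in> \<Phi> y" by (simp add: pr)
      }
      { assume p: "p \<in> \<Phi> y"
        obtain r A where pr: "p = (r, A)" by fastforce
        have AS: "A \<in> Sym" using pe y p pr unfolding proper_elliptic_def by blast
        obtain a where a: "a \<in> \<Phi> x" "pnorm (a - p) < h" using hdist_right[OF D[OF y] p] by blast
        obtain r' A' where ar: "a = (r', A')" by fastforce
        have "\<bar>r' - r\<bar> < h" "maxabs_eig (A' - A) < h"
          using pnorm_parts[of "a - p"] a(2) by (auto simp: pr ar)
        moreover have "maxabs_eig (A - A') = maxabs_eig (A' - A)"
          using maxabs_uminus[of "A' - A"] by simp
        ultimately have "\<bar>r - r'\<bar> < h" "maxabs_eig (A - A') < h" by auto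
        hence "(r - h, A + h *\<^sub>R mat 1) \<in> \<Phi> x" using move[OF pe xO _ AS] a(1) ar by blast
        thus "case p of (r, A) \<Rightarrow> (r - h, A + h *\<^sub>R mat 1) \<in> \<Phi> x" by (simp add: pr)
      }
    qed
  qed
  define \<delta> where "\<delta> = min d1 (min d2 (e/2))"
  show "\<exists>\<delta>>0. \<forall>y\<in>\<Omega>. dist x y < \<delta> \<longrightarrow> hdist (\<Theta> x) (\<Theta> y) < ereal \<eta>"
  proof (intro exI[of _ \<delta>] conjI ballI impI)
    show "\<delta> > 0" using d1 d2 e0 by (simp add: \<delta>_def)
    fix y assume yO: "y \<in> \<Omega>" and dy: "dist x y < \<delta>"
    have x': "x \<in> \<Omega>'" using e0 by (simp add: \<Omega>'_def)
    have y': "y \<in> \<Omega>'" using dy by (simp add: \<Omega>'_def \<delta>_def)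
    have dxy: "dist x y < d1" "dist y x < d1" "dist x y < d2" using dy by (auto simp: \<delta>_def dist_commute)
    have L: "(SUP a\<in>\<Theta> x. INF b\<in>\<Theta> y. ereal (pnorm (a - b))) \<le> ereal h"
    proof (rule SUP_least)
      fix a assume a: "a \<in> \<Theta> x"
      obtain r A where ar: "a = (r, A)" by fastforce
      have aP: "(r, A) \<in> \<Phi> x" and F0: "F x r A \<ge> 0" using a ar by (auto simp: \<Theta>_def)
      have "(r - h, A + h *\<^sub>R mat 1) \<in> \<Phi> y" using D2[OF yO dxy(3)] aP by blast
      moreover have "F y (r - h) (A + h *\<^sub>R mat 1) \<ge> F x r A" using D1[OF x' y' dxy(1)] aP by blast
      ultimately have bT: "(r - h, A + h *\<^sub>R mat 1) \<in> \<Theta> y" using F0 by (simp add: \<Theta>_def)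
      have "a - (r - h, A + h *\<^sub>R mat 1) = (h, (- h) *\<^sub>R mat 1)" by (simp add: ar)
      hence "pnorm (a - (r - h, A + h *\<^sub>R mat 1)) = h" using h0 pnorm_id[of h "- h"] by simp
      thus "(INF b\<in>\<Theta> y. ereal (pnorm (a - b))) \<le> ereal h"
        using bT by (metis INF_lower order_refl)
    qed
    have R: "(SUP b\<in>\<Theta> y. INF a\<in>\<Theta> x. ereal (pnorm (a - b))) \<le> ereal h"
    proof (rule SUP_least)
      fix b assume b: "b \<in> \<Theta> y"
      obtain r A where br: "b = (r, A)" by fastforce
      have bP: "(r, A) \<in> \<Phi> y" and F0: "F y r A \<ge> 0" using b br by (auto simp: \<Theta>_def)
      have "(r - h, A + h *\<^sub>R mat 1) \<in> \<Phi> x" using D2[OF yO dxy(3)] bP by blast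
      moreover have "F x (r - h) (A + h *\<^sub>R mat 1) \<ge> F y r A" using D1[OF y' x' dxy(2)] bP by blast
      ultimately have aT: "(r - h, A + h *\<^sub>R mat 1) \<in> \<Theta> x" using F0 by (simp add: \<Theta>_def)
      have "(r - h, A + h *\<^sub>R mat 1) - b = (- h, h *\<^sub>R mat 1)" by (simp add: br)
      hence "pnorm ((r - h, A + h *\<^sub>R mat 1) - b) = h" using h0 by (simp add: pnorm_id)
      thus "(INF a\<in>\<Theta> x. ereal (pnorm (a - b))) \<le> ereal h"
        using aT by (metis INF_lower order_refl)
    qed
    have "hdist (\<Theta> x) (\<Theta> y) \<le> ereal h" unfolding hdist_def using L R by simp
    also have "ereal h < ereal \<eta>" using \<eta> by (simp add: h_def)
    finally show "hdist (\<Theta> x) (\<Theta> y) < ereal \<eta>" .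
  qed
qed

end
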